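(* Let $X$ be a point set that is a semi-permutation in reduced form. Then $\mathrm{opt}(X)\ge |X|/4-1$.
   Context: Points have integer coordinates. Two points are collinear if they share an $x$- or $y$-coordinate; for non-collinear $p,q$, $\square_{p,q}$ is the smallest closed axis-parallel rectangle containing both; the pair is satisfied in $S$ if some $r\in S\setminus\{p,q\}$ lies in $\square_{p,q}$; $S$ is satisfied if all its non-collinear pairs are. $X$ is a semi-permutation if every horizontal line containing a point of $X$ contains exactly one. $\mathrm{opt}(X)$ is the minimum $|Y|$ with $X\cup Y$ satisfied. Writing $X=\{p_1,\dots,p_m\}$ with $p_1.y<\dots<p_m.y$, $p_i$ ($1<i<m$) is redundant if $p_{i-1}.x=p_i.x=p_{i+1}.x$; $X$ is in reduced form if it has no redundant points. *)

theory Defs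
  imports Complex_Main
begin

type_synonym point = "int \<times> int"

definition collinear :: "point \<Rightarrow> point \<Rightarrow> bool" where
  "collinear p q \<longleftrightarrow> fst p = fst q \<or> snd p = snd q"

definition box :: "point \<Rightarrow> point \<Rightarrow> point set" where
  "box p q = {r. min (fst p) (fst q) \<le> fst r \<and> fst r \<le> max (fst p) (fst q)
              \<and> min (snd p) (snd q) \<le> snd r \<and> snd r \<le> max (snd p) (snd q)}"

definition pair_satisfied :: "point set \<Rightarrow> point \<Rightarrow> point \<Rightarrow> bool" where
  "pair_satisfied S p q \<longleftrightarrow> (\<exists>r \<in> S - {p, q}. r \<in> box p q)"

definition satisfied :: "point set \<Rightarrow> bool" where
  "satisfied S \<longleftrightarrow> (\<forall>p\<in>S. \<forall>q\<in>S. \<not> collinear p q \<longrightarrow> pair_satisfied S p q)"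

definition semi_permutation :: "point set \<Rightarrow> bool" where
  "semi_permutation X \<longleftrightarrow> (\<forall>p\<in>X. \<forall>q\<in>X. snd p = snd q \<longrightarrow> p = q)"

definition opt :: "point set \<Rightarrow> nat" where
  "opt X = (LEAST n. \<exists>Y. finite Y \<and> card Y = n \<and> satisfied (X \<union> Y))"

definition redundant :: "point set \<Rightarrow> point \<Rightarrow> bool" where
  "redundant X p \<longleftrightarrow> p \<in> X \<and> (\<exists>q\<in>X. \<exists>r\<in>X.
      snd q < snd p \<and> snd p < snd r
      \<and> \<not> (\<exists>s\<in>X. snd q < snd s \<and> snd s < snd p)
      \<and> \<not> (\<exists>s\<in>X. snd p < snd s \<and> snd s < snd r)
      \<and> fst q = fst p \<and> fst p = fst r)"

definition reduced_form :: "point set \<Rightarrow> bool" where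
  "reduced_form X \<longleftrightarrow> (\<forall>p\<in>X. \<not> redundant X p)"

end

theory Submission
  imports Defs
begin

lemma opt_exists:
  assumes "finite X"
  shows "\<exists>Y. finite Y \<and> satisfied (X \<union> Y)"
proof -
  define Y where "Y = fst ` X \<times> snd ` X"
  have fY: "finite Y" using assms unfolding Y_def by simp
  have XY: "X \<union> Y = Y" unfolding Y_def by force
  have "satisfied Y"
    unfolding satisfied_def
  proof (intro ballI impI)
    fix p q assume p: "p \<in> Y" and q: "q \<in> Y" and nc: "\<not> collinear p q"
    have "(fst p, snd q) \<in> Y" using p q unfolding Y_def by (simp add: mem_Times_iff)
    moreover have "(fst p, snd q) \<noteq> p" "(fst p, snd q) \<noteq> q"
      using nc unfolding collinear_def by (auto simp: prod_eq_iff)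
    moreover have "(fst p, snd q) \<in> box p q" unfolding box_def by auto
    ultimately show "pair_satisfied Y p q" unfolding pair_satisfied_def by blast
  qed
  thus ?thesis using fY XY by auto
qed

lemma main_bound:
  assumes fin: "finite X" and sp: "semi_permutation X" and rf: "reduced_form X"
    and fY: "finite Y" and sat: "satisfied (X \<union> Y)"
  shows "(card X - 1) div 4 \<le> card Y"
proof -
  define ys where "ys = sorted_list_of_set (snd ` X)"
  define m where "m = card X"
  have injs: "inj_on snd X" using sp unfolding semi_permutation_def inj_on_def by blast
  have len: "length ys = m" unfolding ys_def m_def using card_image[OF injs] by simp
  have setys: "set ys = snd ` X" unfolding ys_def using fin by simp
  have ss: "sorted_wrt (<) ys" unfolding ys_def by (rule strict_sorted_list_of_set)
  have lt: "ys ! a < ys ! b" if "a < b" "b < m" for a b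
    using sorted_wrt_nth_less[OF ss that(1)] that len by simp
  have lt_iff: "ys ! a < ys ! b \<longleftrightarrow> a < b" if "a < m" "b < m" for a b
    using lt[of a b] lt[of b a] that by (metis linorder_neqE_nat order.asym order.irrefl)
  define pt where "pt i = (THE p. p \<in> X \<and> snd p = ys ! i)" for i
  have pt: "pt i \<in> X \<and> snd (pt i) = ys ! i" if "i < m" for i
  proof -
    have "ys ! i \<in> snd ` X" using setys that len nth_mem by metis
    then obtain p where p: "p \<in> X" "snd p = ys ! i" by auto
    have u: "\<And>q. q \<in> X \<and> snd q = ys ! i \<Longrightarrow> q = p"
      using p sp unfolding semi_permutation_def by auto
    have "pt i = p" unfolding pt_def by (rule the_equality) (use p u in blast)+
    thus ?thesis using p by simp
  qed
  have idx: "\<exists>j<m. snd s = ys ! j \<and> s = pt j" if "s \<in> X" for s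
  proof -
    have "snd s \<in> set ys" using setys that by auto
    then obtain j where j: "j < m" "ys ! j = snd s" using len by (metis in_set_conv_nth)
    have "s = pt j" using pt[OF j(1)] j that sp unfolding semi_permutation_def by metis
    thus ?thesis using j by auto
  qed
  have pair: "\<exists>r\<in>Y. ys ! j \<le> snd r \<and> snd r \<le> ys ! (j+1)"
    if j: "j + 1 < m" "fst (pt j) \<noteq> fst (pt (j+1))" for j
  proof -
    have a: "pt j \<in> X" "snd (pt j) = ys ! j" using pt j by auto
    have b: "pt (j+1) \<in> X" "snd (pt (j+1)) = ys ! (j+1)" using pt j by auto
    have ab: "ys ! j < ys ! (j+1)" using lt j by simp
    have nc: "\<not> collinear (pt j) (pt (j+1))" using j(2) a b ab unfolding collinear_def by auto
    then obtain r where r: "r \<in> (X \<union> Y) - {pt j, pt (j+1)}" "r \<in> box (pt j) (pt (j+1))"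
      using sat a b unfolding satisfied_def pair_satisfied_def by blast
    have rs: "ys ! j \<le> snd r" "snd r \<le> ys ! (j+1)" using r(2) a b ab unfolding box_def by auto
    have "r \<notin> X"
    proof
      assume "r \<in> X"
      then obtain k where k: "k < m" "snd r = ys ! k" "r = pt k" using idx by blast
      have "k = j \<or> k = j + 1"
      proof (rule ccontr)
        assume "\<not> ?thesis"
        hence "k < j \<or> j + 1 < k" by auto
        thus False using lt_iff[of k j] lt_iff[of "j+1" k] k rs j by auto
      qed
      thus False using k r(1) by auto
    qed
    thus ?thesis using r(1) rs by auto
  qed
  have win: "\<exists>r\<in>Y. ys ! i \<le> snd r \<and> snd r \<le> ys ! (i+2)" if i: "i + 2 < m" for i
  proof -
    have ne: "fst (pt i) \<noteq> fst (pt (i+1)) \<or> fst (pt (i+1)) \<noteq> fst (pt (i+2))"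
    proof (rule ccontr)
      assume "\<not> ?thesis"
      hence e: "fst (pt i) = fst (pt (i+1))" "fst (pt (i+1)) = fst (pt (i+2))" by auto
      have p0: "pt i \<in> X" "snd (pt i) = ys ! i" using pt i by auto
      have p1: "pt (i+1) \<in> X" "snd (pt (i+1)) = ys ! (i+1)" using pt i by auto
      have p2: "pt (i+2) \<in> X" "snd (pt (i+2)) = ys ! (i+2)" using pt i by auto
      have nb1: "\<not> (\<exists>s\<in>X. ys ! i < snd s \<and> snd s < ys ! (i+1))"
      proof
        assume "\<exists>s\<in>X. ys ! i < snd s \<and> snd s < ys ! (i+1)"
        then obtain s where s: "s \<in> X" "ys ! i < snd s" "snd s < ys ! (i+1)" by blast
        then obtain k where "k < m" "snd s = ys ! k" using idx by blast
        thus False using s using lt_iff[of i k] lt_iff[of k "i+1"] i by auto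
      qed
      have nb2: "\<not> (\<exists>s\<in>X. ys ! (i+1) < snd s \<and> snd s < ys ! (i+2))"
      proof
        assume "\<exists>s\<in>X. ys ! (i+1) < snd s \<and> snd s < ys ! (i+2)"
        then obtain s where s: "s \<in> X" "ys ! (i+1) < snd s" "snd s < ys ! (i+2)" by blast
        then obtain k where "k < m" "snd s = ys ! k" using idx by blast
        thus False using s using lt_iff[of "i+1" k] lt_iff[of k "i+2"] i by auto
      qed
      have l1: "snd (pt i) < snd (pt (i+1))" "snd (pt (i+1)) < snd (pt (i+2))"
        using p0 p1 p2 lt[of i "i+1"] lt[of "i+1" "i+2"] i by auto
      have n1: "\<not> (\<exists>s\<in>X. snd (pt i) < snd s \<and> snd s < snd (pt (i + 1)))" using nb1 p0 p1 by simp
      have n2: "\<not> (\<exists>s\<in>X. snd (pt (i+1)) < snd s \<and> snd s < snd (pt (i + 2)))" using nb2 p1 p2 by simp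
      have "redundant X (pt (i+1))"
        unfolding redundant_def
        apply (rule conjI, rule p1(1))
        apply (rule bexI[OF _ p0(1)], rule bexI[OF _ p2(1)])
        using n1 n2 l1 e by simp
      thus False using rf p1 unfolding reduced_form_def by auto
    qed
    have m1: "ys ! i \<le> ys ! (i+1)" "ys ! (i+1) \<le> ys ! (i+2)" using lt[of i "i+1"] lt[of "i+1" "i+2"] i by auto
    from ne show ?thesis
    proof
      assume "fst (pt i) \<noteq> fst (pt (i+1))"
      then obtain r where "r \<in> Y" "ys ! i \<le> snd r" "snd r \<le> ys ! (i+1)" using pair[of i] i by auto
      thus ?thesis using m1 by force
    next
      assume "fst (pt (i+1)) \<noteq> fst (pt (i+2))"
      then obtain r where "r \<in> Y" "ys ! (i+1) \<le> snd r" "snd r \<le> ys ! (i+2)" using pair[of "i+1"] i by auto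
      thus ?thesis using m1 by force
    qed
  qed
  define sel where "sel k = (SOME r. r \<in> Y \<and> ys ! (4*k) \<le> snd r \<and> snd r \<le> ys ! (4*k+2))" for k
  have sel: "sel k \<in> Y \<and> ys ! (4*k) \<le> snd (sel k) \<and> snd (sel k) \<le> ys ! (4*k+2)"
    if "k < (m - 1) div 4" for k
  proof -
    have "4*k + 2 < m" using that by linarith
    from win[OF this] show ?thesis unfolding sel_def by (rule someI2_bex) auto
  qed
  have inj: "inj_on sel {..<(m - 1) div 4}"
  proof (rule inj_onI)
    fix a b assume a: "a \<in> {..<(m - 1) div 4}" and b: "b \<in> {..<(m - 1) div 4}" and e: "sel a = sel b"
    show "a = b"
    proof (rule ccontr)
      assume "a \<noteq> b"
      hence "a < b \<or> b < a" by auto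
      thus False
      proof
        assume ab: "a < b"
        have "4*b < m" using b by auto
        hence "ys ! (4*a+2) < ys ! (4*b)" using lt[of "4*a+2" "4*b"] ab by auto
        thus False using sel[of a] sel[of b] a b e by auto
      next
        assume ab: "b < a"
        have "4*a < m" using a by auto
        hence "ys ! (4*b+2) < ys ! (4*a)" using lt[of "4*b+2" "4*a"] ab by auto
        thus False using sel[of a] sel[of b] a b e by auto
      qed
    qed
  qed
  have "sel ` {..<(m - 1) div 4} \<subseteq> Y" using sel by auto
  hence "card (sel ` {..<(m - 1) div 4}) \<le> card Y" using fY by (rule card_mono[rotated])
  thus ?thesis using card_image[OF inj] m_def by simp
qed

theorem lemma6p5:
  fixes X :: "point set"
  assumes "finite X" and "semi_permutation X" and "reduced_form X"
  shows "real (opt X) \<ge> real (card X) / 4 - 1"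
proof -
  obtain Y0 where "finite Y0" "satisfied (X \<union> Y0)" using opt_exists[OF assms(1)] by blast
  hence ex: "\<exists>Y. finite Y \<and> card Y = card Y0 \<and> satisfied (X \<union> Y)" by blast
  have "\<exists>Y. finite Y \<and> card Y = opt X \<and> satisfied (X \<union> Y)"
    unfolding opt_def by (rule LeastI[of _ "card Y0"]) (rule ex)
  then obtain Y where Y: "finite Y" "card Y = opt X" "satisfied (X \<union> Y)" by blast
  have h: "(card X - 1) div 4 \<le> opt X" using main_bound[OF assms Y(1) Y(3)] Y(2) by simp
  have "card X \<le> 4 * ((card X - 1) div 4) + 4" by linarith
  hence "real (card X) \<le> 4 * real (opt X) + 4" using h by linarith
  thus ?thesis by simp
qed

end
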